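(* Let $\Gamma$ be a negative-definite plumbing forest, $v$ a vertex with framing $-p<0$, and assume $\Gamma_{+1}$ is negative-definite. Then the sequence \[\mathbb{H}(\Gamma-v)\xrightarrow{\ \mathbb{A}\ }\mathbb{H}(\Gamma)\xrightarrow{\ \mathbb{B}\ }\mathbb{H}(\Gamma_{+1})\longrightarrow 0\] is exact.
   Context: A plumbing forest is a finite forest with integer vertex framings $m(v)$; its lattice is $\mathbb{Z}^{\text{vertices}}$ with pairing $(v,v)=m(v)$, $(v,w)=-1$ if $v,w$ adjacent, $0$ otherwise; negative-definite means this form is. $\mathrm{Char}(\Gamma)$: homomorphisms $k$ from the lattice to $\mathbb{Z}$ with $\langle k,x\rangle\equiv(x,x)\bmod 2$ for all $x$; $v^*=(v,-)$, $v^2=(v,v)$. Lattice homology $\mathbb{H}(\Gamma)$: the complex vector space with basis $\{1\otimes k:k\in\mathrm{Char}(\Gamma)\}$ modulo the relations (I) $1\otimes k\sim0$ if $|\langle k,u\rangle|>-u^2$ for some vertex $u$; (II) $1\otimes k\sim(-1)^{u^2}\otimes(k\mp2u^* )$ if $\langle k,u\rangle=\pm u^2$ for some vertex $u$. $\Gamma-v$ is $\Gamma$ with $v$ deleted; $\Gamma_{+1}$ is $\Gamma$ with the framing of $v$ changed to $-p+1$. For $k\in\mathrm{Char}(\Gamma-v)$ and $i\equiv p\bmod 2$, $k'_i\in\mathrm{Char}(\Gamma)$ agrees with $k$ on $w\ne v$ and takes value $i$ on $v$; $\mathbb{A}(k)=\sum_{i\equiv p\bmod 2,\ |i|\le p}1\otimes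 k'_i$ (the terms with $|i|>p$ vanish in $\mathbb{H}(\Gamma)$). For $k\in\mathrm{Char}(\Gamma)$, $k^{\pm}\in\mathrm{Char}(\Gamma_{+1})$ agree with $k$ on $w\ne v$ and $\langle k^\pm,v\rangle=\langle k,v\rangle\pm1$; $\mathbb{B}(k)=(-1/2)\otimes k^++(1/2)\otimes k^-$. These induce well-defined linear maps on lattice homology. *)

theory Defs
  imports Complex_Main
begin

text \<open>A plumbing graph is given by a vertex set V, an adjacency relation E and
integer framings m.  Lattice elements and homomorphisms lattice -> Z are
represented by their values on the vertices (functions 'a => int).\<close>

definition is_cycle :: "('a \<Rightarrow> 'a \<Rightarrow> bool) \<Rightarrow> 'a list \<Rightarrow> bool" where
  "is_cycle E cs \<longleftrightarrow> length cs \<ge> 3 \<and> distinct cs \<and>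
     (\<forall>i. Suc i < length cs \<longrightarrow> E (cs ! i) (cs ! Suc i)) \<and> E (last cs) (hd cs)"

definition plumbing_forest :: "'a set \<Rightarrow> ('a \<Rightarrow> 'a \<Rightarrow> bool) \<Rightarrow> ('a \<Rightarrow> int) \<Rightarrow> bool" where
  "plumbing_forest V E m \<longleftrightarrow> finite V \<and>
     (\<forall>u w. E u w \<longrightarrow> u \<in> V \<and> w \<in> V) \<and>
     (\<forall>u w. E u w \<longrightarrow> E w u) \<and> (\<forall>u. \<not> E u u) \<and>
     (\<forall>cs. \<not> is_cycle E cs)"

definition Qf :: "('a \<Rightarrow> 'a \<Rightarrow> bool) \<Rightarrow> ('a \<Rightarrow> int) \<Rightarrow> 'a \<Rightarrow> 'a \<Rightarrow> int" where
  "Qf E m u w = (if u = w then m u else if E u w then -1 else 0)"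

definition pairing :: "'a set \<Rightarrow> ('a \<Rightarrow> 'a \<Rightarrow> bool) \<Rightarrow> ('a \<Rightarrow> int) \<Rightarrow> ('a \<Rightarrow> int) \<Rightarrow> ('a \<Rightarrow> int) \<Rightarrow> int" where
  "pairing V E m x y = (\<Sum>u\<in>V. \<Sum>w\<in>V. x u * y w * Qf E m u w)"

definition neg_definite :: "'a set \<Rightarrow> ('a \<Rightarrow> 'a \<Rightarrow> bool) \<Rightarrow> ('a \<Rightarrow> int) \<Rightarrow> bool" where
  "neg_definite V E m \<longleftrightarrow> (\<forall>x. (\<exists>u\<in>V. x u \<noteq> 0) \<longrightarrow> pairing V E m x x < 0)"

definition evalk :: "'a set \<Rightarrow> ('a \<Rightarrow> int) \<Rightarrow> ('a \<Rightarrow> int) \<Rightarrow> int" where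
  "evalk V k x = (\<Sum>u\<in>V. k u * x u)"

definition Char :: "'a set \<Rightarrow> ('a \<Rightarrow> 'a \<Rightarrow> bool) \<Rightarrow> ('a \<Rightarrow> int) \<Rightarrow> ('a \<Rightarrow> int) set" where
  "Char V E m = {k. (\<forall>u. u \<notin> V \<longrightarrow> k u = 0) \<and>
                    (\<forall>x. even (evalk V k x - pairing V E m x x))}"

definition dual :: "'a set \<Rightarrow> ('a \<Rightarrow> 'a \<Rightarrow> bool) \<Rightarrow> ('a \<Rightarrow> int) \<Rightarrow> 'a \<Rightarrow> ('a \<Rightarrow> int)" where
  "dual V E m u = (\<lambda>w. if w \<in> V then Qf E m u w else 0)"

definition delta :: "'b \<Rightarrow> ('b \<Rightarrow> complex)" where
  "delta k = (\<lambda>j. if j = k then 1 else 0)"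

definition free_space :: "'a set \<Rightarrow> ('a \<Rightarrow> 'a \<Rightarrow> bool) \<Rightarrow> ('a \<Rightarrow> int) \<Rightarrow> (('a \<Rightarrow> int) \<Rightarrow> complex) set" where
  "free_space V E m = {f. finite {k. f k \<noteq> 0} \<and> {k. f k \<noteq> 0} \<subseteq> Char V E m}"

definition cspan :: "('b \<Rightarrow> complex) set \<Rightarrow> ('b \<Rightarrow> complex) set" where
  "cspan S = {f. \<exists>G c. finite G \<and> G \<subseteq> S \<and> f = (\<lambda>j. \<Sum>g\<in>G. c g * g j)}"

text \<open>Generators of the relations (I) and (II) defining lattice homology.\<close>
definition relgens :: "'a set \<Rightarrow> ('a \<Rightarrow> 'a \<Rightarrow> bool) \<Rightarrow> ('a \<Rightarrow> int) \<Rightarrow> (('a \<Rightarrow> int) \<Rightarrow> complex) set" where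
  "relgens V E m =
     {delta k | k. k \<in> Char V E m \<and> (\<exists>u\<in>V. \<bar>k u\<bar> > - m u)}
   \<union> {(\<lambda>j. delta k j - (-1::complex) ^ nat \<bar>m u\<bar> * delta (\<lambda>w. k w - 2 * dual V E m u w) j)
       | k u. k \<in> Char V E m \<and> u \<in> V \<and> k u = m u}
   \<union> {(\<lambda>j. delta k j - (-1::complex) ^ nat \<bar>m u\<bar> * delta (\<lambda>w. k w + 2 * dual V E m u w) j)
       | k u. k \<in> Char V E m \<and> u \<in> V \<and> k u = - m u}"

text \<open>Lattice homology H(Gamma) = free_space / rel_space.\<close>
definition rel_space :: "'a set \<Rightarrow> ('a \<Rightarrow> 'a \<Rightarrow> bool) \<Rightarrow> ('a \<Rightarrow> int) \<Rightarrow> (('a \<Rightarrow> int) \<Rightarrow> complex) set" where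
  "rel_space V E m = cspan (relgens V E m)"

definition linext :: "('b \<Rightarrow> ('c \<Rightarrow> complex)) \<Rightarrow> ('b \<Rightarrow> complex) \<Rightarrow> ('c \<Rightarrow> complex)" where
  "linext gen f = (\<lambda>j. \<Sum>k\<in>{k. f k \<noteq> 0}. f k * gen k j)"

definition Agen :: "'a \<Rightarrow> int \<Rightarrow> ('a \<Rightarrow> int) \<Rightarrow> (('a \<Rightarrow> int) \<Rightarrow> complex)" where
  "Agen v p k = (\<lambda>j. \<Sum>i\<in>{i. \<bar>i\<bar> \<le> p \<and> even (i - p)}. delta (k(v := i)) j)"

definition Bgen :: "'a \<Rightarrow> ('a \<Rightarrow> int) \<Rightarrow> (('a \<Rightarrow> int) \<Rightarrow> complex)" where
  "Bgen v k = (\<lambda>j. (-1/2) * delta (k(v := k v + 1)) j + (1/2) * delta (k(v := k v - 1)) j)"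

end

theory Submission
  imports Defs
begin


definition spt :: "('b \<Rightarrow> complex) \<Rightarrow> 'b set" where
  "spt f = {k. f k \<noteq> 0}"

lemma cspan_zero: "(\<lambda>j. 0) \<in> cspan S"
  unfolding cspan_def by (rule CollectI, rule exI[of _ "{}"]) auto

lemma cspan_base: "g \<in> S \<Longrightarrow> g \<in> cspan S"
  unfolding cspan_def by (rule CollectI, rule exI[of _ "{g}"], rule exI[of _ "\<lambda>_. 1"]) auto

lemma sum_extend_if:
  assumes "finite G" "G1 \<subseteq> G"
  shows "(\<Sum>g\<in>G1. c g * (g::'b \<Rightarrow> complex) j) = (\<Sum>g\<in>G. (if g \<in> G1 then c g else 0) * g j)"
proof -
  have "(\<Sum>g\<in>G. (if g \<in> G1 then c g else 0) * g j) = (\<Sum>g\<in>G1. (if g \<in> G1 then c g else 0) * g j)"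
    using assms by (intro sum.mono_neutral_right) auto
  then show ?thesis by simp
qed

lemma cspan_add:
  assumes "f \<in> cspan S" "h \<in> cspan S"
  shows "(\<lambda>j. f j + h j) \<in> cspan S"
proof -
  obtain G1 c1 where 1: "finite G1" "G1 \<subseteq> S" "f = (\<lambda>j. \<Sum>g\<in>G1. c1 g * g j)"
    using assms(1) unfolding cspan_def by blast
  obtain G2 c2 where 2: "finite G2" "G2 \<subseteq> S" "h = (\<lambda>j. \<Sum>g\<in>G2. c2 g * g j)"
    using assms(2) unfolding cspan_def by blast
  define c where "c g = (if g \<in> G1 then c1 g else 0) + (if g \<in> G2 then c2 g else 0)" for g
  have fin: "finite (G1 \<union> G2)" using 1 2 by simp
  have "(\<lambda>j. f j + h j) = (\<lambda>j. \<Sum>g\<in>G1 \<union> G2. c g * g j)"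
  proof
    fix j
    have e1: "f j = (\<Sum>g\<in>G1 \<union> G2. (if g \<in> G1 then c1 g else 0) * g j)"
      unfolding 1(3) by (rule sum_extend_if[OF fin]) simp
    have e2: "h j = (\<Sum>g\<in>G1 \<union> G2. (if g \<in> G2 then c2 g else 0) * g j)"
      unfolding 2(3) by (rule sum_extend_if[OF fin]) simp
    show "f j + h j = (\<Sum>g\<in>G1 \<union> G2. c g * g j)"
      unfolding e1 e2 c_def distrib_right sum.distrib ..
  qed
  then show ?thesis unfolding cspan_def using fin 1(2) 2(2) by (intro CollectI exI conjI) auto
qed

lemma cspan_scale:
  assumes "f \<in> cspan S"
  shows "(\<lambda>j. a * f j) \<in> cspan S"
proof -
  obtain G c where 1: "finite G" "G \<subseteq> S" "f = (\<lambda>j. \<Sum>g\<in>G. c g * g j)"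
    using assms unfolding cspan_def by blast
  have "(\<lambda>j. a * f j) = (\<lambda>j. \<Sum>g\<in>G. (\<lambda>g. a * c g) g * g j)"
    unfolding 1(3) by (simp add: sum_distrib_left mult.assoc)
  then show ?thesis unfolding cspan_def using 1(1,2) by (intro CollectI exI conjI)
qed

lemma cspan_diff:
  assumes "f \<in> cspan S" "h \<in> cspan S"
  shows "(\<lambda>j. f j - h j) \<in> cspan S"
proof -
  have "(\<lambda>j. f j + (-1) * h j) \<in> cspan S"
    by (rule cspan_add[OF assms(1) cspan_scale[OF assms(2)]])
  then show ?thesis by simp
qed

lemma cspan_sum:
  assumes "finite I" "\<forall>i\<in>I. f i \<in> cspan S"
  shows "(\<lambda>j. \<Sum>i\<in>I. f i j) \<in> cspan S"
  using assms
proof (induction I rule: finite_induct)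
  case empty then show ?case by (simp add: cspan_zero)
next
  case (insert x F)
  then show ?case using cspan_add[of "f x" S "\<lambda>j. \<Sum>i\<in>F. f i j"] by simp
qed

lemma cspan_subset:
  assumes "S \<subseteq> cspan T" "f \<in> cspan S"
  shows "f \<in> cspan T"
proof -
  obtain G c where 1: "finite G" "G \<subseteq> S" "f = (\<lambda>j. \<Sum>g\<in>G. c g * g j)"
    using assms unfolding cspan_def by blast
  have "(\<lambda>j. \<Sum>g\<in>G. c g * g j) \<in> cspan T"
    using 1 assms(1) by (intro cspan_sum) (auto intro!: cspan_scale)
  then show ?thesis using 1 by simp
qed

lemma cspan_mono: "S \<subseteq> T \<Longrightarrow> f \<in> cspan S \<Longrightarrow> f \<in> cspan T"
  by (rule cspan_subset[of S T]) (auto intro: cspan_base)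

lemma cspan_least:
  assumes "(\<lambda>j. 0) \<in> Q" "\<And>f h. f \<in> Q \<Longrightarrow> h \<in> Q \<Longrightarrow> (\<lambda>j. f j + h j) \<in> Q"
    "\<And>f a. f \<in> Q \<Longrightarrow> (\<lambda>j. a * f j) \<in> Q" "S \<subseteq> Q" "f \<in> cspan S"
  shows "f \<in> Q"
proof -
  obtain G c where 1: "finite G" "G \<subseteq> S" "f = (\<lambda>j. \<Sum>g\<in>G. c g * g j)"
    using assms unfolding cspan_def by blast
  have "\<forall>H\<subseteq>G. (\<lambda>j. \<Sum>g\<in>H. c g * g j) \<in> Q"
  proof (intro allI impI)
    fix H assume "H \<subseteq> G"
    then have "finite H" "H \<subseteq> S" using 1 finite_subset by auto
    then show "(\<lambda>j. \<Sum>g\<in>H. c g * g j) \<in> Q"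
    proof (induction H rule: finite_induct)
      case empty then show ?case using assms(1) by simp
    next
      case (insert x F)
      then show ?case using assms(2)[OF assms(3)[of x "c x"], of "\<lambda>j. \<Sum>g\<in>F. c g * g j"] assms(4)
        by auto
    qed
  qed
  then show ?thesis using 1 by auto
qed

lemma spt_cspan:
  assumes "\<forall>g\<in>S. finite (spt g) \<and> spt g \<subseteq> X" "f \<in> cspan S"
  shows "finite (spt f) \<and> spt f \<subseteq> X"
proof -
  obtain G c where 1: "finite G" "G \<subseteq> S" "f = (\<lambda>j. \<Sum>g\<in>G. c g * g j)"
    using assms unfolding cspan_def by blast
  have "spt f \<subseteq> (\<Union>g\<in>G. spt g)"
  proof
    fix k assume "k \<in> spt f"
    then have "(\<Sum>g\<in>G. c g * g k) \<noteq> 0" using 1 by (simp add: spt_def)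
    then obtain g where "g \<in> G" "c g * g k \<noteq> 0" by (meson sum.not_neutral_contains_not_neutral)
    then show "k \<in> (\<Union>g\<in>G. spt g)" by (auto simp: spt_def)
  qed
  moreover have "finite (\<Union>g\<in>G. spt g)" "(\<Union>g\<in>G. spt g) \<subseteq> X" using 1 assms by auto
  ultimately show ?thesis by (meson finite_subset order_trans)
qed

lemma linext_eq:
  assumes "finite S" "spt f \<subseteq> S"
  shows "linext gen f j = (\<Sum>k\<in>S. f k * gen k j)"
  unfolding linext_def using assms
  by (intro sum.mono_neutral_left) (auto simp: spt_def)

lemma linext_delta: "linext gen (delta k) = gen k"
proof
  fix j
  have "spt (delta k) = {k}" by (auto simp: spt_def delta_def)
  then show "linext gen (delta k) j = gen k j"
    by (subst linext_eq[of "{k}"]) (auto simp: delta_def)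
qed

lemma linext_two:
  "linext gen (\<lambda>j. a * delta x j + b * delta y j) = (\<lambda>z. a * gen x z + b * gen y z)"
proof
  fix z
  have "spt (\<lambda>j. a * delta x j + b * delta y j) \<subseteq> {x, y}" by (auto simp: spt_def delta_def)
  then show "linext gen (\<lambda>j. a * delta x j + b * delta y j) z = a * gen x z + b * gen y z"
    by (subst linext_eq[of "{x,y}"]) (auto simp: delta_def distrib_right sum.insert_if)
qed

lemma linext_two':
  "linext gen (\<lambda>j. delta x j - b * delta y j) = (\<lambda>z. gen x z - b * gen y z)"
  using linext_two[of gen 1 x "-b" y] by simp

lemma linext_add:
  assumes "finite (spt f)" "finite (spt h)"
  shows "linext gen (\<lambda>k. f k + h k) j = linext gen f j + linext gen h j"
proof -
  have s: "spt (\<lambda>k. f k + h k) \<subseteq> spt f \<union> spt h" by (auto simp: spt_def)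
  show ?thesis
    using assms s
    by (simp add: linext_eq[of "spt f \<union> spt h"] distrib_right sum.distrib)
qed

lemma linext_scale:
  assumes "finite (spt f)"
  shows "linext gen (\<lambda>k. a * f k) j = a * linext gen f j"
proof -
  have s: "spt (\<lambda>k. a * f k) \<subseteq> spt f" by (auto simp: spt_def)
  show ?thesis
    using assms s
    by (simp add: linext_eq[of "spt f"] sum_distrib_left mult.assoc)
qed

lemma linext_sum:
  assumes "finite I" "\<forall>i\<in>I. finite (spt (h i))"
  shows "linext gen (\<lambda>k. \<Sum>i\<in>I. c i * h i k) = (\<lambda>j. \<Sum>i\<in>I. c i * linext gen (h i) j)"
proof
  fix j
  define S where "S = (\<Union>i\<in>I. spt (h i))"
  have fS: "finite S" using assms by (simp add: S_def)
  have s: "spt (\<lambda>k. \<Sum>i\<in>I. c i * h i k) \<subseteq> S"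
  proof
    fix k assume "k \<in> spt (\<lambda>k. \<Sum>i\<in>I. c i * h i k)"
    then obtain i where "i \<in> I" "c i * h i k \<noteq> 0" unfolding spt_def
      by (meson mem_Collect_eq sum.not_neutral_contains_not_neutral)
    then show "k \<in> S" by (auto simp: S_def spt_def)
  qed
  have "linext gen (\<lambda>k. \<Sum>i\<in>I. c i * h i k) j = (\<Sum>k\<in>S. (\<Sum>i\<in>I. c i * h i k) * gen k j)"
    using linext_eq[OF fS s] .
  also have "\<dots> = (\<Sum>i\<in>I. c i * (\<Sum>k\<in>S. h i k * gen k j))"
    by (simp add: sum_distrib_right sum_distrib_left mult.assoc sum.swap[of _ S])
  also have "\<dots> = (\<Sum>i\<in>I. c i * linext gen (h i) j)"
    using fS by (intro sum.cong refl, subst linext_eq[of S]) (auto simp: S_def)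
  finally show "linext gen (\<lambda>k. \<Sum>i\<in>I. c i * h i k) j = (\<Sum>i\<in>I. c i * linext gen (h i) j)" .
qed

lemma linext_cspan:
  assumes "\<forall>g\<in>S. finite (spt g)" "\<forall>g\<in>S. linext gen g \<in> cspan T" "f \<in> cspan S"
  shows "linext gen f \<in> cspan T"
proof -
  obtain G c where 1: "finite G" "G \<subseteq> S" "f = (\<lambda>j. \<Sum>g\<in>G. c g * g j)"
    using assms unfolding cspan_def by blast
  have "linext gen f = (\<lambda>j. \<Sum>g\<in>G. c g * linext gen g j)"
    unfolding 1(3) using 1 assms(1) by (intro linext_sum) auto
  also have "\<dots> \<in> cspan T" using 1 assms(2) by (intro cspan_sum) (auto intro!: cspan_scale)
  finally show ?thesis .
qed

lemma spt_delta: "spt (delta k) = {k}" by (auto simp: spt_def delta_def)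

lemma spt_two: "spt (\<lambda>j. a * delta x j + b * delta y j) \<subseteq> {x, y}"
  by (auto simp: spt_def delta_def)

lemma spt_two': "spt (\<lambda>j. delta x j - b * delta y j) \<subseteq> {x, y}"
  by (auto simp: spt_def delta_def)

lemma spt_sumdelta:
  assumes "finite I"
  shows "spt (\<lambda>j. \<Sum>i\<in>I. c i * delta (a i) j) \<subseteq> a ` I"
proof
  fix k assume "k \<in> spt (\<lambda>j. \<Sum>i\<in>I. c i * delta (a i) j)"
  then obtain i where "i \<in> I" "c i * delta (a i) k \<noteq> 0" unfolding spt_def
    by (meson mem_Collect_eq sum.not_neutral_contains_not_neutral)
  then show "k \<in> a ` I" by (auto simp: delta_def split: if_splits)
qed

lemma expand_fs:
  assumes "finite (spt f)"
  shows "f = (\<lambda>x. \<Sum>k\<in>spt f. f k * delta k x)"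
proof
  fix x
  have "(\<Sum>k\<in>spt f. f k * delta k x) = (\<Sum>k\<in>spt f. if k = x then f x else 0)"
    by (intro sum.cong) (auto simp: delta_def)
  also have "\<dots> = f x" using assms by (simp add: sum.delta' spt_def) 
  finally show "f x = (\<Sum>k\<in>spt f. f k * delta k x)" by simp
qed



lemma sym_dsum:
  fixes F :: "'a \<Rightarrow> 'a \<Rightarrow> int"
  assumes "finite V" "\<forall>u w. F u w = F w u"
  shows "even ((\<Sum>u\<in>V. \<Sum>w\<in>V. F u w) - (\<Sum>u\<in>V. F u u))"
  using assms(1)
proof (induction V rule: finite_induct)
  case empty then show ?case by simp
next
  case (insert a V)
  have "(\<Sum>u\<in>insert a V. \<Sum>w\<in>insert a V. F u w)
      = F a a + (\<Sum>w\<in>V. F a w) + (\<Sum>u\<in>V. F u a) + (\<Sum>u\<in>V. \<Sum>w\<in>V. F u w)"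
    using insert by (simp add: sum.distrib)
  also have "(\<Sum>u\<in>V. F u a) = (\<Sum>w\<in>V. F a w)" using assms(2) by simp
  finally have "(\<Sum>u\<in>insert a V. \<Sum>w\<in>insert a V. F u w) - (\<Sum>u\<in>insert a V. F u u)
     = 2 * (\<Sum>w\<in>V. F a w) + ((\<Sum>u\<in>V. \<Sum>w\<in>V. F u w) - (\<Sum>u\<in>V. F u u))"
    using insert by simp
  then show ?case using insert.IH by simp
qed

lemma char_iff:
  assumes "finite V" "\<forall>u w. E u w \<longrightarrow> E w u"
  shows "k \<in> Char V E m \<longleftrightarrow> (\<forall>u. u \<notin> V \<longrightarrow> k u = 0) \<and> (\<forall>u\<in>V. even (k u - m u))"
proof -
  have Qs: "Qf E m u w = Qf E m w u" for u w
    using assms(2) by (auto simp: Qf_def)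
  have key: "even (evalk V k x - pairing V E m x x - (\<Sum>u\<in>V. (k u - m u) * x u))" for x
  proof -
    have a: "even (pairing V E m x x - (\<Sum>u\<in>V. x u * x u * m u))"
      unfolding pairing_def using sym_dsum[OF assms(1), of "\<lambda>u w. x u * x w * Qf E m u w"] Qs
      by (simp add: Qf_def mult.commute)
    have b: "even ((\<Sum>u\<in>V. x u * x u * m u) - (\<Sum>u\<in>V. x u * m u))"
      unfolding sum_subtractf[symmetric] by (intro dvd_sum) auto
    have c: "evalk V k x - (\<Sum>u\<in>V. (k u - m u) * x u) = (\<Sum>u\<in>V. x u * m u)"
      unfolding evalk_def sum_subtractf[symmetric] by (intro sum.cong) (auto simp: algebra_simps)
    have "evalk V k x - pairing V E m x x - (\<Sum>u\<in>V. (k u - m u) * x u)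
       = - ((pairing V E m x x - (\<Sum>u\<in>V. x u * x u * m u)) + ((\<Sum>u\<in>V. x u * x u * m u) - (\<Sum>u\<in>V. x u * m u)))"
      using c by linarith
    moreover have "even (- ((pairing V E m x x - (\<Sum>u\<in>V. x u * x u * m u)) + ((\<Sum>u\<in>V. x u * x u * m u) - (\<Sum>u\<in>V. x u * m u))))"
      using a b by (simp only: even_minus dvd_add)
    ultimately show ?thesis by (simp only:)
  qed
  have "(\<forall>x. even (evalk V k x - pairing V E m x x)) \<longleftrightarrow> (\<forall>u\<in>V. even (k u - m u))"
  proof
    assume h: "\<forall>x. even (evalk V k x - pairing V E m x x)"
    show "\<forall>u\<in>V. even (k u - m u)"
    proof
      fix u assume u: "u \<in> V"
      define x where "x = (\<lambda>w. if w = u then 1 else (0::int))"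
      have "(\<Sum>w\<in>V. (k w - m w) * x w) = k u - m u"
        using u assms(1) by (simp add: x_def if_distrib sum.delta cong: if_cong)
      then have eq: "k u - m u = (evalk V k x - pairing V E m x x) - (evalk V k x - pairing V E m x x - (\<Sum>w\<in>V. (k w - m w) * x w))"
        by simp
      show "even (k u - m u)"
        by (subst eq) (rule dvd_diff[OF h[rule_format, of x] key[of x]])
    qed
  next
    assume h: "\<forall>u\<in>V. even (k u - m u)"
    show "\<forall>x. even (evalk V k x - pairing V E m x x)"
    proof
      fix x
      have "even (\<Sum>u\<in>V. (k u - m u) * x u)" using h by (intro dvd_sum) auto
      then have "even ((evalk V k x - pairing V E m x x - (\<Sum>u\<in>V. (k u - m u) * x u)) + (\<Sum>u\<in>V. (k u - m u) * x u))"
        using key[of x] by (rule dvd_add[rotated])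
      then show "even (evalk V k x - pairing V E m x x)" by simp
    qed
  qed
  then show ?thesis unfolding Char_def by blast
qed





definition tv :: "int \<Rightarrow> nat \<Rightarrow> int" where
  "tv p t = - p + 2 * int t"

definition nn :: "'a \<Rightarrow> int \<Rightarrow> ('a \<Rightarrow> int) \<Rightarrow> nat" where
  "nn v p j = nat ((j v + p + 1) div 2)"

definition Cg :: "'a \<Rightarrow> int \<Rightarrow> ('a \<Rightarrow> int) \<Rightarrow> (('a \<Rightarrow> int) \<Rightarrow> complex)" where
  "Cg v p j = (\<lambda>x. -2 * (\<Sum>t<nn v p j. delta (j(v := tv p t)) x))"

definition Wsp :: "'a set \<Rightarrow> ('a \<Rightarrow> 'a \<Rightarrow> bool) \<Rightarrow> ('a \<Rightarrow> int) \<Rightarrow> 'a \<Rightarrow> int \<Rightarrow> (('a \<Rightarrow> int) \<Rightarrow> complex) set" where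
  "Wsp V E m v p = cspan (relgens V E m \<union> {Agen v p k | k. k \<in> Char (V - {v}) E m})"

lemma relI: "k \<in> Char V E m \<Longrightarrow> u \<in> V \<Longrightarrow> - m u < \<bar>k u\<bar> \<Longrightarrow> delta k \<in> relgens V E m"
  unfolding relgens_def by blast

lemma relIIp: "k \<in> Char V E m \<Longrightarrow> u \<in> V \<Longrightarrow> k u = m u \<Longrightarrow>
  (\<lambda>j. delta k j - (-1::complex) ^ nat \<bar>m u\<bar> * delta (\<lambda>w. k w - 2 * dual V E m u w) j) \<in> relgens V E m"
  unfolding relgens_def by blast

lemma relIIm: "k \<in> Char V E m \<Longrightarrow> u \<in> V \<Longrightarrow> k u = - m u \<Longrightarrow>
  (\<lambda>j. delta k j - (-1::complex) ^ nat \<bar>m u\<bar> * delta (\<lambda>w. k w + 2 * dual V E m u w) j) \<in> relgens V E m"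
  unfolding relgens_def by blast

lemma Agen_alt:
  assumes "p \<ge> 0"
  shows "Agen v p k = (\<lambda>x. \<Sum>t<Suc (nat p). delta (k(v := tv p t)) x)"
proof
  fix x
  show "Agen v p k x = (\<Sum>t<Suc (nat p). delta (k(v := tv p t)) x)"
    unfolding Agen_def
  proof (rule sum.reindex_bij_witness[where i="tv p" and j="\<lambda>i. nat ((i + p) div 2)"])
    show "\<And>a. a \<in> {i. \<bar>i\<bar> \<le> p \<and> even (i - p)} \<Longrightarrow> tv p (nat ((a + p) div 2)) = a"
      by (auto simp: tv_def elim!: evenE) 
    show "\<And>a. a \<in> {i. \<bar>i\<bar> \<le> p \<and> even (i - p)} \<Longrightarrow> nat ((a + p) div 2) \<in> {..<Suc (nat p)}"
      by auto
    show "\<And>b. b \<in> {..<Suc (nat p)} \<Longrightarrow> nat ((tv p b + p) div 2) = b"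
      by (auto simp: tv_def)
    show "\<And>b. b \<in> {..<Suc (nat p)} \<Longrightarrow> tv p b \<in> {i. \<bar>i\<bar> \<le> p \<and> even (i - p)}"
      using assms by (auto simp: tv_def)
    show "\<And>a. a \<in> {i. \<bar>i\<bar> \<le> p \<and> even (i - p)} \<Longrightarrow> delta (k(v := tv p (nat ((a + p) div 2)))) x = delta (k(v := a)) x"
      by (auto simp: tv_def elim!: evenE)
  qed
qed


lemma spt_sumdelta1:
  assumes "finite I"
  shows "finite (spt (\<lambda>x. \<Sum>i\<in>I. delta (a i) x))"
proof -
  have "spt (\<lambda>x. \<Sum>i\<in>I. delta (a i) x) \<subseteq> a ` I"
    using spt_sumdelta[OF assms, of "\<lambda>_. 1" a] by simp
  then show ?thesis using assms finite_subset by blast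
qed

lemma linext_B_tele:
  "linext (Bgen v) (\<lambda>x. \<Sum>t<N. delta (j(v := tv p t)) x)
   = (\<lambda>z. (-1/2) * (delta (j(v := tv p N - 1)) z - delta (j(v := - p - 1)) z))"
proof -
  have "linext (Bgen v) (\<lambda>x. \<Sum>t\<in>{..<N}. (\<lambda>_. 1) t * (\<lambda>t. delta (j(v := tv p t))) t x)
     = (\<lambda>z. \<Sum>t\<in>{..<N}. (\<lambda>_. 1) t * linext (Bgen v) ((\<lambda>t. delta (j(v := tv p t))) t) z)"
    by (rule linext_sum) (auto simp: spt_delta)
  then have "linext (Bgen v) (\<lambda>x. \<Sum>t<N. delta (j(v := tv p t)) x)
     = (\<lambda>z. \<Sum>t<N. Bgen v (j(v := tv p t)) z)"
    by (simp add: linext_delta)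
  also have "\<dots> = (\<lambda>z. \<Sum>t<N. (-1/2) * (delta (j(v := tv p (Suc t) - 1)) z - delta (j(v := tv p t - 1)) z))"
  proof
    fix z
    have "tv p (Suc t) - 1 = tv p t + 1" for t by (simp add: tv_def)
    then show "(\<Sum>t<N. Bgen v (j(v := tv p t)) z) = (\<Sum>t<N. (-1/2) * (delta (j(v := tv p (Suc t) - 1)) z - delta (j(v := tv p t - 1)) z))"
      by (simp add: Bgen_def algebra_simps)
  qed
  also have "\<dots> = (\<lambda>z. (-1/2) * (delta (j(v := tv p N - 1)) z - delta (j(v := - p - 1)) z))"
  proof
    fix z
    show "(\<Sum>t<N. (-1/2) * (delta (j(v := tv p (Suc t) - 1)) z - delta (j(v := tv p t - 1)) z))
        = (-1/2) * (delta (j(v := tv p N - 1)) z - delta (j(v := - p - 1)) z)"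
      unfolding sum_distrib_left[symmetric]
      by (subst sum_lessThan_telescope[where f="\<lambda>t. delta (j(v := tv p t - 1)) z"]) (simp add: tv_def)
  qed
  finally show ?thesis .
qed

context
  fixes V :: "'a set" and E :: "'a \<Rightarrow> 'a \<Rightarrow> bool" and m :: "'a \<Rightarrow> int" and v :: 'a and p :: int
  assumes finV: "finite V" and symE: "\<forall>u w. E u w \<longrightarrow> E w u"
    and vV: "v \<in> V" and mv: "m v = - p" and p0: "p > 0"
begin

lemma ch: "k \<in> Char V E mm \<longleftrightarrow> (\<forall>u. u \<notin> V \<longrightarrow> k u = 0) \<and> (\<forall>u\<in>V. even (k u - mm u))"
  using char_iff[OF finV symE] .

lemma ch0: "k \<in> Char (V - {v}) E mm \<longleftrightarrow> (\<forall>u. u \<notin> V - {v} \<longrightarrow> k u = 0) \<and> (\<forall>u\<in>V - {v}. even (k u - mm u))"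
  using char_iff[of "V - {v}" E] finV symE by simp

lemma killW: "k \<in> Char V E m \<Longrightarrow> u \<in> V \<Longrightarrow> - m u < \<bar>k u\<bar> \<Longrightarrow> delta k \<in> Wsp V E m v p"
  unfolding Wsp_def by (rule cspan_base) (auto intro: relI)

lemma relWp: "k \<in> Char V E m \<Longrightarrow> u \<in> V \<Longrightarrow> k u = m u \<Longrightarrow>
  (\<lambda>j. delta k j - (-1::complex) ^ nat \<bar>m u\<bar> * delta (\<lambda>w. k w - 2 * dual V E m u w) j) \<in> Wsp V E m v p"
  unfolding Wsp_def by (rule cspan_base) (auto intro: relIIp)

lemma relWm: "k \<in> Char V E m \<Longrightarrow> u \<in> V \<Longrightarrow> k u = - m u \<Longrightarrow>
  (\<lambda>j. delta k j - (-1::complex) ^ nat \<bar>m u\<bar> * delta (\<lambda>w. k w + 2 * dual V E m u w) j) \<in> Wsp V E m v p"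
  unfolding Wsp_def by (rule cspan_base) (auto intro: relIIm)

lemma AW: "k \<in> Char (V - {v}) E m \<Longrightarrow> Agen v p k \<in> Wsp V E m v p"
  unfolding Wsp_def by (rule cspan_base) auto

lemma kill1: "k \<in> Char V E (m(v := - p + 1)) \<Longrightarrow> u \<in> V \<Longrightarrow> - (m(v := - p + 1)) u < \<bar>k u\<bar> \<Longrightarrow>
   delta k \<in> cspan (relgens V E (m(v := - p + 1)))"
  by (rule cspan_base) (auto intro: relI)

lemma K1:
  assumes k: "k \<in> Char V E m"
  shows "(\<lambda>x. delta k x - linext (Cg v p) (Bgen v k) x) \<in> Wsp V E m v p"
proof -
  define a where "a = (k v + p) div 2"
  have ev: "even (k v + p)" using k vV mv by (simp add: ch)
  then have a2: "2 * a = k v + p" unfolding a_def by simp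
  have lin: "linext (Cg v p) (Bgen v k) = (\<lambda>z. (-1/2) * Cg v p (k(v := k v + 1)) z + (1/2) * Cg v p (k(v := k v - 1)) z)"
    unfolding Bgen_def by (rule linext_two)
  have "k v + 1 + p + 1 = 2 * (a + 1)" using a2 by simp
  then have "(k v + 1 + p + 1) div 2 = a + 1" by simp
  then have n1: "nn v p (k(v := k v + 1)) = nat (a + 1)"
    unfolding nn_def by simp
  have "k v - 1 + p + 1 = 2 * a" using a2 by simp
  then have "(k v - 1 + p + 1) div 2 = a" by simp
  then have n2: "nn v p (k(v := k v - 1)) = nat a"
    unfolding nn_def by simp
  show ?thesis
  proof (cases "0 \<le> a")
    case True
    then have "nat (a + 1) = Suc (nat a)" by simp
    moreover have "k(v := tv p (nat a)) = k" using True a2 by (auto simp: tv_def)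
    ultimately have "(\<lambda>x. delta k x - linext (Cg v p) (Bgen v k) x) = (\<lambda>x. 0)"
      unfolding lin Cg_def n1 n2 by (simp add: algebra_simps)
    then show ?thesis unfolding Wsp_def by (simp add: cspan_zero)
  next
    case False
    then have "nat (a + 1) = 0" "nat a = 0" by auto
    then have "(\<lambda>x. delta k x - linext (Cg v p) (Bgen v k) x) = delta k"
      unfolding lin Cg_def n1 n2 by simp
    moreover have "delta k \<in> Wsp V E m v p"
      using False a2 by (intro killW[OF k vV]) (simp add: mv)
    ultimately show ?thesis by simp
  qed
qed

lemma S1:
  assumes j: "j \<in> Char V E (m(v := - p + 1))"
  shows "(\<lambda>x. delta j x - linext (Bgen v) (Cg v p j) x) \<in> cspan (relgens V E (m(v := - p + 1)))"
proof -
  define N where "N = nn v p j"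
  have ev: "even (j v + p - 1)" using j vV by (simp add: ch)
  have L: "linext (Bgen v) (Cg v p j) x = -2 * linext (Bgen v) (\<lambda>x. \<Sum>t<N. delta (j(v := tv p t)) x) x" for x
    unfolding Cg_def N_def by (rule linext_scale) (simp add: spt_sumdelta1)
  have e: "linext (Bgen v) (Cg v p j) = (\<lambda>z. delta (j(v := tv p N - 1)) z - delta (j(v := - p - 1)) z)"
  proof
    fix z show "linext (Bgen v) (Cg v p j) z = delta (j(v := tv p N - 1)) z - delta (j(v := - p - 1)) z"
      unfolding L linext_B_tele by (simp add: algebra_simps)
  qed
  have jm: "j(v := - p - 1) \<in> Char V E (m(v := - p + 1))" using j vV by (simp add: ch)
  have km: "delta (j(v := - p - 1)) \<in> cspan (relgens V E (m(v := - p + 1)))"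
    by (rule kill1[OF jm vV]) (use p0 in simp)
  show ?thesis
  proof (cases "j v + p + 1 \<ge> 0")
    case True
    have "even (j v + p + 1)" using ev by presburger
    then have "2 * ((j v + p + 1) div 2) = j v + p + 1" by presburger
    then have "tv p N - 1 = j v" unfolding N_def nn_def tv_def using True by simp
    then have "(\<lambda>x. delta j x - linext (Bgen v) (Cg v p j) x) = delta (j(v := - p - 1))"
      unfolding e by simp
    then show ?thesis using km by simp
  next
    case False
    then have "N = 0" unfolding N_def nn_def by simp
    then have "(\<lambda>x. delta j x - linext (Bgen v) (Cg v p j) x) = delta j"
      unfolding e by (simp add: tv_def)
    moreover have "delta j \<in> cspan (relgens V E (m(v := - p + 1)))"
      by (rule kill1[OF j vV]) (use False in simp)
    ultimately show ?thesis by simp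
  qed
qed

lemma BA:
  assumes k: "k \<in> Char (V - {v}) E m"
  shows "linext (Bgen v) (Agen v p k) \<in> cspan (relgens V E (m(v := - p + 1)))"
proof -
  have e: "linext (Bgen v) (Agen v p k) = (\<lambda>z. (-1/2) * (delta (k(v := p + 1)) z - delta (k(v := - p - 1)) z))"
    unfolding Agen_alt[OF less_imp_le[OF p0]] linext_B_tele using p0 by (simp add: tv_def add.commute)
  have c1: "k(v := p + 1) \<in> Char V E (m(v := - p + 1))" "k(v := - p - 1) \<in> Char V E (m(v := - p + 1))"
    using k vV by (auto simp: ch ch0)
  have "delta (k(v := p + 1)) \<in> cspan (relgens V E (m(v := - p + 1)))"
    by (rule kill1[OF c1(1) vV]) (use p0 in simp)
  moreover have "delta (k(v := - p - 1)) \<in> cspan (relgens V E (m(v := - p + 1)))"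
    by (rule kill1[OF c1(2) vV]) (use p0 in simp)
  ultimately show ?thesis unfolding e by (intro cspan_scale cspan_diff)
qed


lemma dual_out: "w \<notin> V \<Longrightarrow> dual V E mm u w = 0"
  by (simp add: dual_def)

lemma dual_ne: "u \<noteq> v \<Longrightarrow> dual V E (m(v := X)) u = dual V E m u"
  by (auto simp: dual_def Qf_def)

lemma dual_vw: "w \<noteq> v \<Longrightarrow> dual V E (m(v := X)) v w = dual V E m v w"
  by (auto simp: dual_def Qf_def)

lemma dual_uv: "u \<noteq> v \<Longrightarrow> dual V E mm u v = (if E u v then -1 else 0)"
  using vV by (auto simp: dual_def Qf_def)

lemma dual_vu: "u \<noteq> v \<Longrightarrow> u \<in> V \<Longrightarrow> dual V E mm v u = (if E u v then -1 else 0)"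
  using symE by (auto simp: dual_def Qf_def)

lemma dual_vv: "dual V E mm v v = mm v"
  using vV by (simp add: dual_def Qf_def)

lemma ch_shift: "k \<in> Char V E mm \<Longrightarrow> (\<lambda>w. k w + 2 * c * dual V E mm' u w) \<in> Char V E mm"
  by (auto simp: ch dual_def)

lemma ch_shift': "k \<in> Char V E mm \<Longrightarrow> (\<lambda>w. k w - 2 * dual V E mm' u w) \<in> Char V E mm"
  "k \<in> Char V E mm \<Longrightarrow> (\<lambda>w. k w + 2 * dual V E mm' u w) \<in> Char V E mm"
  using ch_shift[of k mm "-1" mm' u] ch_shift[of k mm 1 mm' u] by simp_all

lemma ch_upd: "k \<in> Char V E mm \<Longrightarrow> even (a - mm' v) \<Longrightarrow> (\<forall>w\<in>V. w \<noteq> v \<longrightarrow> even (k w - mm' w)) \<Longrightarrow> k(v := a) \<in> Char V E mm'"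
  using vV by (auto simp: ch)

lemma ch_pm: "k \<in> Char V E m \<Longrightarrow> k(v := k v + 1) \<in> Char V E (m(v := - p + 1))"
   "k \<in> Char V E m \<Longrightarrow> k(v := k v - 1) \<in> Char V E (m(v := - p + 1))"
proof -
  assume k: "k \<in> Char V E m"
  then have e: "even (k v + p)" using vV mv by (simp add: ch)
  show "k(v := k v + 1) \<in> Char V E (m(v := - p + 1))"
    by (rule ch_upd[OF k]) (use e k in \<open>auto simp: ch\<close>)
  show "k(v := k v - 1) \<in> Char V E (m(v := - p + 1))"
    by (rule ch_upd[OF k]) (use e k in \<open>auto simp: ch\<close>)
qed

lemma Bgen_in:
  assumes "delta (k(v := k v + 1)) \<in> cspan T" "delta (k(v := k v - 1)) \<in> cspan T"
  shows "Bgen v k \<in> cspan T"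
  unfolding Bgen_def by (intro cspan_add cspan_scale assms)

lemma BR_I:
  assumes k: "k \<in> Char V E m" and u: "u \<in> V" and big: "- m u < \<bar>k u\<bar>"
  shows "linext (Bgen v) (delta k) \<in> cspan (relgens V E (m(v := - p + 1)))"
  unfolding linext_delta
proof (rule Bgen_in)
  have e: "even (k v + p)" using k vV mv by (simp add: ch)
  have "- (m(v := - p + 1)) u < \<bar>(k(v := k v + 1)) u\<bar> \<and> - (m(v := - p + 1)) u < \<bar>(k(v := k v - 1)) u\<bar>"
  proof (cases "u = v")
    case True
    then have "p < \<bar>k v\<bar>" using big mv by simp
    then show ?thesis using True e by (auto elim!: evenE) 
  next
    case False
    then show ?thesis using big by simp
  qed
  then show "delta (k(v := k v + 1)) \<in> cspan (relgens V E (m(v := - p + 1)))"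
    "delta (k(v := k v - 1)) \<in> cspan (relgens V E (m(v := - p + 1)))"
    using kill1[OF ch_pm(1)[OF k] u] kill1[OF ch_pm(2)[OF k] u] by auto
qed


abbreviation "m1 \<equiv> m(v := - p + 1)"

lemma m1v: "m1 v = - p + 1" by simp

lemma sign_v: "(-1::complex) ^ nat \<bar>m v\<bar> = - ((-1) ^ nat \<bar>m1 v\<bar>)"
proof -
  have "nat \<bar>m v\<bar> = Suc (nat \<bar>m1 v\<bar>)" using p0 mv by simp
  then show ?thesis by simp
qed

lemma BR_IIp:
  assumes k: "k \<in> Char V E m" and u: "u \<in> V" and ku: "k u = m u"
  shows "linext (Bgen v) (\<lambda>j. delta k j - (-1::complex) ^ nat \<bar>m u\<bar> * delta (\<lambda>w. k w - 2 * dual V E m u w) j)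
    \<in> cspan (relgens V E m1)"
proof -
  define s where "s = (-1::complex) ^ nat \<bar>m u\<bar>"
  define y where "y = (\<lambda>w. k w - 2 * dual V E m u w)"
  have L: "linext (Bgen v) (\<lambda>j. delta k j - s * delta y j) = (\<lambda>z. Bgen v k z - s * Bgen v y z)"
    by (rule linext_two')
  have yc: "y \<in> Char V E m" unfolding y_def by (rule ch_shift'(1)[OF k])
  show ?thesis unfolding s_def[symmetric] y_def[symmetric] L
  proof (cases "u = v")
    case False
    define k1 where "k1 = k(v := k v + 1)"
    define k2 where "k2 = k(v := k v - 1)"
    have y1: "y(v := y v + 1) = (\<lambda>w. k1 w - 2 * dual V E m1 u w)"
      by (rule ext) (simp add: y_def k1_def dual_ne[OF False])
    have y2: "y(v := y v - 1) = (\<lambda>w. k2 w - 2 * dual V E m1 u w)"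
      by (rule ext) (simp add: y_def k2_def dual_ne[OF False])
    have eq: "(\<lambda>z. Bgen v k z - s * Bgen v y z) =
       (\<lambda>z. (-1/2) * (delta k1 z - s * delta (\<lambda>w. k1 w - 2 * dual V E m1 u w) z)
          + (1/2) * (delta k2 z - s * delta (\<lambda>w. k2 w - 2 * dual V E m1 u w) z))"
      by (rule ext) (simp only: Bgen_def y1 y2 k1_def[symmetric] k2_def[symmetric], simp add: algebra_simps)
    have ss: "s = (-1) ^ nat \<bar>m1 u\<bar>" using False by (simp add: s_def)
    have r1: "(\<lambda>z. delta k1 z - s * delta (\<lambda>w. k1 w - 2 * dual V E m1 u w) z) \<in> relgens V E m1"
      unfolding ss k1_def by (rule relIIp[OF ch_pm(1)[OF k] u]) (use ku False in simp)
    have r2: "(\<lambda>z. delta k2 z - s * delta (\<lambda>w. k2 w - 2 * dual V E m1 u w) z) \<in> relgens V E m1"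
      unfolding ss k2_def by (rule relIIp[OF ch_pm(2)[OF k] u]) (use ku False in simp)
    show "(\<lambda>z. Bgen v k z - s * Bgen v y z) \<in> cspan (relgens V E m1)"
      unfolding eq by (intro cspan_add cspan_scale cspan_base r1 r2)
  next
    case True
    have kv: "k v = - p" using ku True mv by simp
    have yv: "y v = p" using kv mv True by (simp add: y_def dual_vv)
    define kp where "kp = k(v := - p + 1)"
    define s' where "s' = (-1::complex) ^ nat \<bar>m1 v\<bar>"
    have ss: "s = - s'" unfolding s_def s'_def True by (rule sign_v)
    have yy: "(\<lambda>w. kp w - 2 * dual V E m1 v w) = y(v := p - 1)"
    proof
      fix w show "kp w - 2 * dual V E m1 v w = (y(v := p - 1)) w"
        by (cases "w = v") (simp_all add: kp_def y_def True dual_vv dual_vw)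
    qed
    have eq: "(\<lambda>z. Bgen v k z - s * Bgen v y z) =
       (\<lambda>z. (-1/2) * (delta kp z - s' * delta (\<lambda>w. kp w - 2 * dual V E m1 v w) z)
          + (1/2) * delta (k(v := - p - 1)) z + (s/2) * delta (y(v := p + 1)) z)"
      by (rule ext) (simp only: Bgen_def yy kv yv, simp add: kp_def ss algebra_simps)
    have r1: "(\<lambda>z. delta kp z - s' * delta (\<lambda>w. kp w - 2 * dual V E m1 v w) z) \<in> relgens V E m1"
    proof -
      have "kp \<in> Char V E m1" using ch_pm(1)[OF k] kv by (simp add: kp_def)
      then show ?thesis unfolding s'_def by (rule relIIp[OF _ vV]) (simp add: kp_def)
    qed
    have c2: "k(v := - p - 1) \<in> Char V E m1" using ch_pm(2)[OF k] kv by simp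
    have c3: "y(v := p + 1) \<in> Char V E m1"
      by (rule ch_upd[OF yc]) (use yc in \<open>auto simp: ch\<close>)
    have r2: "delta (k(v := - p - 1)) \<in> cspan (relgens V E m1)"
      by (rule kill1[OF c2 vV]) (use p0 in simp)
    have r3: "delta (y(v := p + 1)) \<in> cspan (relgens V E m1)"
      by (rule kill1[OF c3 vV]) (use p0 in simp)
    show "(\<lambda>z. Bgen v k z - s * Bgen v y z) \<in> cspan (relgens V E m1)"
      unfolding eq by (intro cspan_add cspan_scale cspan_base r1 r2 r3)
  qed
qed

lemma BR_IIm:
  assumes k: "k \<in> Char V E m" and u: "u \<in> V" and ku: "k u = - m u"
  shows "linext (Bgen v) (\<lambda>j. delta k j - (-1::complex) ^ nat \<bar>m u\<bar> * delta (\<lambda>w. k w + 2 * dual V E m u w) j)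
    \<in> cspan (relgens V E m1)"
proof -
  define s where "s = (-1::complex) ^ nat \<bar>m u\<bar>"
  define y where "y = (\<lambda>w. k w + 2 * dual V E m u w)"
  have L: "linext (Bgen v) (\<lambda>j. delta k j - s * delta y j) = (\<lambda>z. Bgen v k z - s * Bgen v y z)"
    by (rule linext_two')
  have yc: "y \<in> Char V E m" unfolding y_def by (rule ch_shift'(2)[OF k])
  show ?thesis unfolding s_def[symmetric] y_def[symmetric] L
  proof (cases "u = v")
    case False
    define k1 where "k1 = k(v := k v + 1)"
    define k2 where "k2 = k(v := k v - 1)"
    have y1: "y(v := y v + 1) = (\<lambda>w. k1 w + 2 * dual V E m1 u w)"
      by (rule ext) (simp add: y_def k1_def dual_ne[OF False])
    have y2: "y(v := y v - 1) = (\<lambda>w. k2 w + 2 * dual V E m1 u w)"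
      by (rule ext) (simp add: y_def k2_def dual_ne[OF False])
    have eq: "(\<lambda>z. Bgen v k z - s * Bgen v y z) =
       (\<lambda>z. (-1/2) * (delta k1 z - s * delta (\<lambda>w. k1 w + 2 * dual V E m1 u w) z)
          + (1/2) * (delta k2 z - s * delta (\<lambda>w. k2 w + 2 * dual V E m1 u w) z))"
      by (rule ext) (simp only: Bgen_def y1 y2 k1_def[symmetric] k2_def[symmetric], simp add: algebra_simps)
    have ss: "s = (-1) ^ nat \<bar>m1 u\<bar>" using False by (simp add: s_def)
    have r1: "(\<lambda>z. delta k1 z - s * delta (\<lambda>w. k1 w + 2 * dual V E m1 u w) z) \<in> relgens V E m1"
      unfolding ss k1_def by (rule relIIm[OF ch_pm(1)[OF k] u]) (use ku False in simp)
    have r2: "(\<lambda>z. delta k2 z - s * delta (\<lambda>w. k2 w + 2 * dual V E m1 u w) z) \<in> relgens V E m1"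
      unfolding ss k2_def by (rule relIIm[OF ch_pm(2)[OF k] u]) (use ku False in simp)
    show "(\<lambda>z. Bgen v k z - s * Bgen v y z) \<in> cspan (relgens V E m1)"
      unfolding eq by (intro cspan_add cspan_scale cspan_base r1 r2)
  next
    case True
    have kv: "k v = p" using ku True mv by simp
    have yv: "y v = - p" using kv mv True by (simp add: y_def dual_vv)
    define km where "km = k(v := p - 1)"
    define s' where "s' = (-1::complex) ^ nat \<bar>m1 v\<bar>"
    have ss: "s = - s'" unfolding s_def s'_def True by (rule sign_v)
    have yy: "(\<lambda>w. km w + 2 * dual V E m1 v w) = y(v := - p + 1)"
    proof
      fix w show "km w + 2 * dual V E m1 v w = (y(v := - p + 1)) w"
        by (cases "w = v") (simp_all add: km_def y_def True dual_vv dual_vw)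
    qed
    have eq: "(\<lambda>z. Bgen v k z - s * Bgen v y z) =
       (\<lambda>z. (1/2) * (delta km z - s' * delta (\<lambda>w. km w + 2 * dual V E m1 v w) z)
          + (-1/2) * delta (k(v := p + 1)) z + (-s/2) * delta (y(v := - p - 1)) z)"
      by (rule ext) (simp only: Bgen_def yy kv yv, simp add: km_def ss algebra_simps)
    have r1: "(\<lambda>z. delta km z - s' * delta (\<lambda>w. km w + 2 * dual V E m1 v w) z) \<in> relgens V E m1"
    proof -
      have "km \<in> Char V E m1" using ch_pm(2)[OF k] kv by (simp add: km_def)
      then show ?thesis unfolding s'_def by (rule relIIm[OF _ vV]) (simp add: km_def)
    qed
    have c2: "k(v := p + 1) \<in> Char V E m1" using ch_pm(1)[OF k] kv by simp
    have c3: "y(v := - p - 1) \<in> Char V E m1"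
      by (rule ch_upd[OF yc]) (use yc in \<open>auto simp: ch\<close>)
    have r2: "delta (k(v := p + 1)) \<in> cspan (relgens V E m1)"
      by (rule kill1[OF c2 vV]) (use p0 in simp)
    have r3: "delta (y(v := - p - 1)) \<in> cspan (relgens V E m1)"
      by (rule kill1[OF c3 vV]) (use p0 in simp)
    show "(\<lambda>z. Bgen v k z - s * Bgen v y z) \<in> cspan (relgens V E m1)"
      unfolding eq by (intro cspan_add cspan_scale cspan_base r1 r2 r3)
  qed
qed


lemma BR:
  assumes r: "r \<in> relgens V E m"
  shows "linext (Bgen v) r \<in> cspan (relgens V E m1)"
proof -
  from r consider
    (I) k u where "r = delta k" "k \<in> Char V E m" "u \<in> V" "- m u < \<bar>k u\<bar>"
  | (P) k u where "r = (\<lambda>j. delta k j - (-1::complex) ^ nat \<bar>m u\<bar> * delta (\<lambda>w. k w - 2 * dual V E m u w) j)"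
      "k \<in> Char V E m" "u \<in> V" "k u = m u"
  | (M) k u where "r = (\<lambda>j. delta k j - (-1::complex) ^ nat \<bar>m u\<bar> * delta (\<lambda>w. k w + 2 * dual V E m u w) j)"
      "k \<in> Char V E m" "u \<in> V" "k u = - m u"
    unfolding relgens_def by blast
  then show ?thesis
  proof cases
    case I then show ?thesis using BR_I by simp
  next
    case P then show ?thesis using BR_IIp by simp
  next
    case M then show ?thesis using BR_IIm by simp
  qed
qed

abbreviation "W \<equiv> Wsp V E m v p"

lemma CgW: "(\<And>t. t < nn v p j \<Longrightarrow> delta (j(v := tv p t)) \<in> W) \<Longrightarrow> Cg v p j \<in> W"
  unfolding Cg_def Wsp_def by (intro cspan_scale cspan_sum) auto

lemma J_ch: "j \<in> Char V E m1 \<Longrightarrow> even (a + p) \<Longrightarrow> j(v := a) \<in> Char V E m"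
  by (rule ch_upd) (auto simp: ch mv)

lemma tv_ev: "even (tv p t + p)" by (simp add: tv_def)

lemma AJ: assumes j: "j \<in> Char V E m1"
  shows "(\<lambda>x. \<Sum>t<Suc (nat p). delta (j(v := tv p t)) x) \<in> W"
proof -
  have "j(v := 0) \<in> Char (V - {v}) E m" using j by (auto simp: ch ch0)
  then have "Agen v p (j(v := 0)) \<in> W" by (rule AW)
  then show ?thesis unfolding Agen_alt[OF less_imp_le[OF p0]] by simp
qed

lemma kill_nb:
  assumes z: "z \<in> Char V E m" and zv: "z v = - p" and u: "u \<in> V" "u \<noteq> v" "E u v" and zu: "z u = - m u"
  shows "delta z \<in> W"
proof -
  define sv where "sv = (-1::complex) ^ nat \<bar>m v\<bar>"
  have r: "(\<lambda>j. delta z j - sv * delta (\<lambda>w. z w - 2 * dual V E m v w) j) \<in> W"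
    unfolding sv_def by (rule relWp[OF z vV]) (simp add: zv mv)
  have k: "delta (\<lambda>w. z w - 2 * dual V E m v w) \<in> W"
    by (rule killW[OF ch_shift'(1)[OF z] u(1)]) (simp add: dual_vu[OF u(2,1)] u(3) zu)
  have "(\<lambda>j. (delta z j - sv * delta (\<lambda>w. z w - 2 * dual V E m v w) j) + sv * delta (\<lambda>w. z w - 2 * dual V E m v w) j) \<in> W"
    using cspan_add[OF r[unfolded Wsp_def] cspan_scale[OF k[unfolded Wsp_def], where a=sv]] by (simp add: Wsp_def)
  then show ?thesis by simp
qed

lemma sum_split_at: "(P::nat) \<le> N \<Longrightarrow> (\<Sum>t<N. f t) = (\<Sum>t<P. f t) + (\<Sum>t\<in>{P..<N}. (f t :: complex))"
proof -
  assume "P \<le> N"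
  then have "{..<N} = {..<P} \<union> {P..<N}" by auto
  moreover have "sum f ({..<P} \<union> {P..<N}) = sum f {..<P} + sum f {P..<N}"
    by (rule sum.union_disjoint) auto
  ultimately show ?thesis by simp
qed

lemma K2_I:
  assumes j: "j \<in> Char V E m1" and u: "u \<in> V" and big: "- m1 u < \<bar>j u\<bar>"
  shows "Cg v p j \<in> W"
proof (cases "u = v")
  case False
  show ?thesis
  proof (rule CgW)
    fix t
    have "j(v := tv p t) \<in> Char V E m" by (rule J_ch[OF j tv_ev])
    then show "delta (j(v := tv p t)) \<in> W" by (rule killW[OF _ u]) (use big False in simp)
  qed
next
  case True
  have ev: "even (j v + p - 1)" using j vV by (simp add: ch)
  have big': "p - 1 < \<bar>j v\<bar>" using big True by simp
  show ?thesis
  proof (cases "j v < 0")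
    case True
    then have "j v + p + 1 \<le> 0" using big' ev by presburger
    then have "nn v p j = 0" by (simp add: nn_def)
    then have "Cg v p j = (\<lambda>x. 0)" by (simp add: Cg_def)
    then show ?thesis by (simp add: Wsp_def cspan_zero)
  next
    case False
    then have jv: "p + 1 \<le> j v" using big' ev by presburger
    define N where "N = nn v p j"
    have NP: "Suc (nat p) \<le> N" using jv p0 by (simp add: N_def nn_def)
    have e: "Cg v p j = (\<lambda>x. -2 * ((\<Sum>t<Suc (nat p). delta (j(v := tv p t)) x)
                 + (\<Sum>t\<in>{Suc (nat p)..<N}. delta (j(v := tv p t)) x)))"
      unfolding Cg_def N_def[symmetric] using sum_split_at[OF NP] by simp
    have a: "(\<lambda>x. \<Sum>t<Suc (nat p). delta (j(v := tv p t)) x) \<in> W" by (rule AJ[OF j])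
    have b: "(\<lambda>x. \<Sum>t\<in>{Suc (nat p)..<N}. delta (j(v := tv p t)) x) \<in> W"
      unfolding Wsp_def
    proof (intro cspan_sum ballI)
      fix t assume t: "t \<in> {Suc (nat p)..<N}"
      have "j(v := tv p t) \<in> Char V E m" by (rule J_ch[OF j tv_ev])
      then show "delta (j(v := tv p t)) \<in> cspan (relgens V E m \<union> {Agen v p k |k. k \<in> Char (V - {v}) E m})"
        using killW[OF _ vV, of "j(v := tv p t)"] t p0 by (auto simp: tv_def mv Wsp_def)
    qed simp
    show ?thesis unfolding e using cspan_scale[OF cspan_add[OF a[unfolded Wsp_def] b[unfolded Wsp_def]], where a="-2"]
      by (simp add: Wsp_def)
  qed
qed


lemma sumW: "(\<And>t. t < (N::nat) \<Longrightarrow> f t \<in> W) \<Longrightarrow> (\<lambda>z. c * (\<Sum>t<N. f t z)) \<in> W"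
  unfolding Wsp_def by (intro cspan_scale cspan_sum) auto

lemma W_add: "f \<in> W \<Longrightarrow> g \<in> W \<Longrightarrow> (\<lambda>z. f z + g z) \<in> W"
  unfolding Wsp_def by (rule cspan_add)

lemma W_scale: "f \<in> W \<Longrightarrow> (\<lambda>z. c * f z) \<in> W"
  unfolding Wsp_def by (rule cspan_scale)

lemma W_zero: "(\<lambda>z. 0) \<in> W"
  unfolding Wsp_def by (rule cspan_zero)

lemma d1uu: "u \<in> V \<Longrightarrow> dual V E mm u u = mm u"
  by (simp add: dual_def Qf_def)

lemma K2_IIp:
  assumes j: "j \<in> Char V E m1" and u: "u \<in> V" and ju: "j u = m1 u"
  shows "linext (Cg v p) (\<lambda>x. delta j x - (-1::complex) ^ nat \<bar>m1 u\<bar> * delta (\<lambda>w. j w - 2 * dual V E m1 u w) x) \<in> W"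
proof -
  define s where "s = (-1::complex) ^ nat \<bar>m1 u\<bar>"
  define y where "y = (\<lambda>w. j w - 2 * dual V E m1 u w)"
  define N where "N = nn v p j"
  have L: "linext (Cg v p) (\<lambda>x. delta j x - s * delta y x) = (\<lambda>z. Cg v p j z - s * Cg v p y z)"
    by (rule linext_two')
  have yc: "y \<in> Char V E m1" unfolding y_def by (rule ch_shift'(1)[OF j])
  have ev: "even (j v + p - 1)" using j vV by (simp add: ch)
  have main: "(\<lambda>z. Cg v p j z - s * Cg v p y z) \<in> W"
  proof (cases "u = v")
    case False
    have su: "s = (-1) ^ nat \<bar>m u\<bar>" using False by (simp add: s_def)
    have jt: "\<And>t. j(v := tv p t) \<in> Char V E m" by (rule J_ch[OF j tv_ev])
    have rt: "\<And>t. (\<lambda>x. delta (j(v := tv p t)) x - s * delta (\<lambda>w. (j(v := tv p t)) w - 2 * dual V E m u w) x) \<in> W"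
      unfolding su by (rule relWp[OF jt u]) (use ju False in simp)
    show ?thesis
    proof (cases "E u v")
      case False
      have dv: "dual V E m u v = 0" using \<open>u \<noteq> v\<close> False by (simp add: dual_uv)
      have ny: "nn v p y = N" unfolding N_def nn_def y_def using dv dual_ne[OF \<open>u \<noteq> v\<close>] by simp
      have Yt: "y(v := tv p t) = (\<lambda>w. (j(v := tv p t)) w - 2 * dual V E m u w)" for t
        by (rule ext) (simp add: y_def dual_ne[OF \<open>u \<noteq> v\<close>] dv)
      have eq: "(\<lambda>z. Cg v p j z - s * Cg v p y z) =
         (\<lambda>z. -2 * (\<Sum>t<N. delta (j(v := tv p t)) z - s * delta (\<lambda>w. (j(v := tv p t)) w - 2 * dual V E m u w) z))"
        by (rule ext) (simp only: Cg_def ny Yt N_def[symmetric], simp add: sum_subtractf sum_distrib_left algebra_simps)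
      show ?thesis unfolding eq by (rule sumW) (rule rt)
    next
      case True
      have dv: "dual V E m u v = -1" using \<open>u \<noteq> v\<close> True by (simp add: dual_uv)
      have Yt: "y(v := tv p (Suc t)) = (\<lambda>w. (j(v := tv p t)) w - 2 * dual V E m u w)" for t
        by (rule ext) (simp add: y_def dual_ne[OF \<open>u \<noteq> v\<close>] dv tv_def)
      show ?thesis
      proof (cases "j v + p + 1 \<ge> 0")
        case True
        have "(y v + p + 1) div 2 = (j v + p + 1) div 2 + 1"
          using dv dual_ne[OF \<open>u \<noteq> v\<close>] by (simp add: y_def)
        then have ny: "nn v p y = Suc N" unfolding N_def nn_def using True by simp
        define z0 where "z0 = y(v := - p)"
        have z0: "delta z0 \<in> W"
        proof (rule kill_nb[OF _ _ u \<open>u \<noteq> v\<close> \<open>E u v\<close>])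
          show "z0 \<in> Char V E m" unfolding z0_def by (rule J_ch[OF yc]) simp
          show "z0 v = - p" by (simp add: z0_def)
          show "z0 u = - m u" using \<open>u \<noteq> v\<close> ju u by (simp add: z0_def y_def d1uu)
        qed
        have y0: "y(v := tv p 0) = z0" by (simp add: z0_def tv_def)
        have eq: "(\<lambda>z. Cg v p j z - s * Cg v p y z) =
           (\<lambda>z. (-2 * (\<Sum>t<N. delta (j(v := tv p t)) z - s * delta (\<lambda>w. (j(v := tv p t)) w - 2 * dual V E m u w) z))
              + (2 * s) * delta z0 z)"
          by (rule ext) (simp only: Cg_def ny sum.lessThan_Suc_shift Yt y0 N_def[symmetric],
              simp add: sum_subtractf sum_distrib_left algebra_simps)
        show ?thesis unfolding eq by (intro W_add W_scale z0 sumW rt)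
      next
        case False
        have "(y v + p + 1) div 2 = (j v + p + 1) div 2 + 1"
          using dv dual_ne[OF \<open>u \<noteq> v\<close>] by (simp add: y_def)
        moreover have "(j v + p + 1) div 2 + 1 \<le> 0" using False ev by presburger
        ultimately have "nn v p y = 0" "nn v p j = 0" using False by (simp_all add: nn_def)
        then have eq: "(\<lambda>z. Cg v p j z - s * Cg v p y z) = (\<lambda>z. 0)" by (simp add: Cg_def)
        show ?thesis unfolding eq by (rule W_zero)
      qed
    qed
  next
    case True
    have jv: "j v = - p + 1" using ju True by simp
    have yv: "y v = p - 1" using jv True vV by (simp add: y_def dual_vv)
    have nj: "nn v p j = 1" using jv by (simp add: nn_def)
    have ny: "nn v p y = nat p" using yv by (simp add: nn_def)
    define sv where "sv = (-1::complex) ^ nat \<bar>m v\<bar>"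
    have ss: "sv = - s" unfolding sv_def s_def True by (rule sign_v)
    define J0 where "J0 = j(v := - p)"
    have J0c: "J0 \<in> Char V E m" unfolding J0_def by (rule J_ch[OF j]) simp
    have r: "(\<lambda>x. delta J0 x - sv * delta (\<lambda>w. J0 w - 2 * dual V E m v w) x) \<in> W"
      unfolding sv_def by (rule relWp[OF J0c vV]) (simp add: J0_def mv)
    have JJ: "(\<lambda>w. J0 w - 2 * dual V E m v w) = y(v := tv p (nat p))"
    proof
      fix w show "J0 w - 2 * dual V E m v w = (y(v := tv p (nat p))) w"
        using p0 by (cases "w = v") (simp_all add: J0_def y_def True dual_vv dual_vw mv tv_def)
    qed
    have a: "(\<lambda>x. \<Sum>t<Suc (nat p). delta (y(v := tv p t)) x) \<in> W" by (rule AJ[OF yc])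
    have eq: "(\<lambda>z. Cg v p j z - s * Cg v p y z) =
       (\<lambda>z. -2 * (delta J0 z - sv * delta (\<lambda>w. J0 w - 2 * dual V E m v w) z) + (2 * s) * (\<Sum>t<Suc (nat p). delta (y(v := tv p t)) z))"
      by (rule ext) (simp only: Cg_def nj ny JJ, simp add: J0_def tv_def ss algebra_simps)
    show ?thesis unfolding eq by (intro W_add W_scale r a)
  qed
  then show ?thesis unfolding s_def[symmetric] y_def[symmetric] L .
qed


lemma sign_cases: "(-1::complex) ^ n = 1 \<or> (-1::complex) ^ n = -1"
  by (cases "even n") auto

lemma K2_IIm:
  assumes j: "j \<in> Char V E m1" and u: "u \<in> V" and ju: "j u = - m1 u"
  shows "linext (Cg v p) (\<lambda>x. delta j x - (-1::complex) ^ nat \<bar>m1 u\<bar> * delta (\<lambda>w. j w + 2 * dual V E m1 u w) x) \<in> W"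
proof -
  define s where "s = (-1::complex) ^ nat \<bar>m1 u\<bar>"
  define y where "y = (\<lambda>w. j w + 2 * dual V E m1 u w)"
  define N where "N = nn v p j"
  have L: "linext (Cg v p) (\<lambda>x. delta j x - s * delta y x) = (\<lambda>z. Cg v p j z - s * Cg v p y z)"
    by (rule linext_two')
  have yc: "y \<in> Char V E m1" unfolding y_def by (rule ch_shift'(2)[OF j])
  have ev: "even (j v + p - 1)" using j vV by (simp add: ch)
  have main: "(\<lambda>z. Cg v p j z - s * Cg v p y z) \<in> W"
  proof (cases "u = v")
    case False
    have su: "s = (-1) ^ nat \<bar>m u\<bar>" using False by (simp add: s_def)
    have jt: "\<And>t. j(v := tv p t) \<in> Char V E m" by (rule J_ch[OF j tv_ev])
    have rt: "\<And>t. (\<lambda>x. delta (j(v := tv p t)) x - s * delta (\<lambda>w. (j(v := tv p t)) w + 2 * dual V E m u w) x) \<in> W"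
      unfolding su by (rule relWm[OF jt u]) (use ju False in simp)
    show ?thesis
    proof (cases "E u v")
      case False
      have dv: "dual V E m u v = 0" using \<open>u \<noteq> v\<close> False by (simp add: dual_uv)
      have ny: "nn v p y = N" unfolding N_def nn_def y_def using dv dual_ne[OF \<open>u \<noteq> v\<close>] by simp
      have Yt: "y(v := tv p t) = (\<lambda>w. (j(v := tv p t)) w + 2 * dual V E m u w)" for t
        by (rule ext) (simp add: y_def dual_ne[OF \<open>u \<noteq> v\<close>] dv)
      have eq: "(\<lambda>z. Cg v p j z - s * Cg v p y z) =
         (\<lambda>z. -2 * (\<Sum>t<N. delta (j(v := tv p t)) z - s * delta (\<lambda>w. (j(v := tv p t)) w + 2 * dual V E m u w) z))"
        by (rule ext) (simp only: Cg_def ny Yt N_def[symmetric], simp add: sum_subtractf sum_distrib_left algebra_simps)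
      show ?thesis unfolding eq by (rule sumW) (rule rt)
    next
      case True
      have dv: "dual V E m u v = -1" using \<open>u \<noteq> v\<close> True by (simp add: dual_uv)
      have Yt: "y(v := tv p t) = (\<lambda>w. (j(v := tv p (Suc t))) w + 2 * dual V E m u w)" for t
        by (rule ext) (simp add: y_def dual_ne[OF \<open>u \<noteq> v\<close>] dv tv_def)
      have yv: "(y v + p + 1) div 2 = (j v + p + 1) div 2 - 1"
        using dv dual_ne[OF \<open>u \<noteq> v\<close>] by (simp add: y_def)
      show ?thesis
      proof (cases N)
        case (Suc M)
        then have ny: "nn v p y = M" using yv unfolding N_def nn_def by simp
        define J0 where "J0 = j(v := tv p 0)"
        have z0: "delta J0 \<in> W"
        proof (rule kill_nb[OF _ _ u \<open>u \<noteq> v\<close> \<open>E u v\<close>])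
          show "J0 \<in> Char V E m" unfolding J0_def by (rule jt)
          show "J0 v = - p" by (simp add: J0_def tv_def)
          show "J0 u = - m u" using \<open>u \<noteq> v\<close> ju u by (simp add: J0_def)
        qed
        have eq: "(\<lambda>z. Cg v p j z - s * Cg v p y z) =
           (\<lambda>z. (-2 * (\<Sum>t<M. delta (j(v := tv p (Suc t))) z - s * delta (\<lambda>w. (j(v := tv p (Suc t))) w + 2 * dual V E m u w) z))
              + (-2) * delta J0 z)"
          by (rule ext) (simp only: Cg_def ny N_def[symmetric] Suc sum.lessThan_Suc_shift Yt J0_def[symmetric],
              simp add: sum_subtractf sum_distrib_left algebra_simps)
        show ?thesis unfolding eq by (intro W_add W_scale z0 sumW rt)
      next
        case 0
        then have "nn v p y = 0" "nn v p j = 0" using yv unfolding N_def nn_def by simp_all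
        then have eq: "(\<lambda>z. Cg v p j z - s * Cg v p y z) = (\<lambda>z. 0)" by (simp add: Cg_def)
        show ?thesis unfolding eq by (rule W_zero)
      qed
    qed
  next
    case True
    have jv: "j v = p - 1" using ju True by simp
    have yv: "y v = - p + 1" using jv True vV by (simp add: y_def dual_vv)
    have nj: "nn v p j = nat p" using jv by (simp add: nn_def)
    have ny: "nn v p y = 1" using yv by (simp add: nn_def)
    define sv where "sv = (-1::complex) ^ nat \<bar>m v\<bar>"
    have ss: "sv = - s" unfolding sv_def s_def True by (rule sign_v)
    define Y0 where "Y0 = y(v := - p)"
    have Y0c: "Y0 \<in> Char V E m" unfolding Y0_def by (rule J_ch[OF yc]) simp
    have r: "(\<lambda>x. delta Y0 x - sv * delta (\<lambda>w. Y0 w - 2 * dual V E m v w) x) \<in> W"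
      unfolding sv_def by (rule relWp[OF Y0c vV]) (simp add: Y0_def mv)
    have JJ: "(\<lambda>w. Y0 w - 2 * dual V E m v w) = j(v := tv p (nat p))"
    proof
      fix w show "Y0 w - 2 * dual V E m v w = (j(v := tv p (nat p))) w"
        using p0 by (cases "w = v") (simp_all add: Y0_def y_def True dual_vv dual_vw mv tv_def)
    qed
    have a: "(\<lambda>x. \<Sum>t<Suc (nat p). delta (j(v := tv p t)) x) \<in> W" by (rule AJ[OF j])
    have eq: "(\<lambda>z. Cg v p j z - s * Cg v p y z) =
       (\<lambda>z. (2 * s) * (delta Y0 z - sv * delta (\<lambda>w. Y0 w - 2 * dual V E m v w) z) + (-2) * (\<Sum>t<Suc (nat p). delta (j(v := tv p t)) z))"
    proof
      fix z
      show "Cg v p j z - s * Cg v p y z =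
        (2 * s) * (delta Y0 z - sv * delta (\<lambda>w. Y0 w - 2 * dual V E m v w) z) + (-2) * (\<Sum>t<Suc (nat p). delta (j(v := tv p t)) z)"
        unfolding JJ ss using sign_cases[of "nat \<bar>m1 u\<bar>"]
        by (simp only: Cg_def nj ny s_def[symmetric], elim disjE) (simp_all add: Y0_def tv_def algebra_simps)
    qed
    show ?thesis unfolding eq by (intro W_add W_scale r a)
  qed
  then show ?thesis unfolding s_def[symmetric] y_def[symmetric] L .
qed

lemma K2:
  assumes r: "r \<in> relgens V E m1"
  shows "linext (Cg v p) r \<in> W"
proof -
  from r consider
    (I) k u where "r = delta k" "k \<in> Char V E m1" "u \<in> V" "- m1 u < \<bar>k u\<bar>"
  | (P) k u where "r = (\<lambda>j. delta k j - (-1::complex) ^ nat \<bar>m1 u\<bar> * delta (\<lambda>w. k w - 2 * dual V E m1 u w) j)"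
      "k \<in> Char V E m1" "u \<in> V" "k u = m1 u"
  | (M) k u where "r = (\<lambda>j. delta k j - (-1::complex) ^ nat \<bar>m1 u\<bar> * delta (\<lambda>w. k w + 2 * dual V E m1 u w) j)"
      "k \<in> Char V E m1" "u \<in> V" "k u = - m1 u"
    unfolding relgens_def by blast
  then show ?thesis
  proof cases
    case I then show ?thesis using K2_I by (simp add: linext_delta)
  next
    case P then show ?thesis using K2_IIp by simp
  next
    case M then show ?thesis using K2_IIm by simp
  qed
qed


lemma fs_two': "finite (spt (\<lambda>j. delta x j - b * delta y j))"
  by (rule finite_subset[OF spt_two']) simp

lemma fs_rel: "r \<in> relgens V E mm \<Longrightarrow> finite (spt r)"
proof -
  assume r: "r \<in> relgens V E mm"
  then consider (I) k where "r = delta k"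
    | (P) k u where "r = (\<lambda>j. delta k j - (-1::complex) ^ nat \<bar>mm u\<bar> * delta (\<lambda>w. k w - 2 * dual V E mm u w) j)"
    | (M) k u where "r = (\<lambda>j. delta k j - (-1::complex) ^ nat \<bar>mm u\<bar> * delta (\<lambda>w. k w + 2 * dual V E mm u w) j)"
    unfolding relgens_def by blast
  then show ?thesis
  proof cases
    case I then show ?thesis by (simp add: spt_delta)
  next
    case P then show ?thesis by (simp only: fs_two')
  next
    case M then show ?thesis by (simp only: fs_two')
  qed
qed

lemma fs_A: "finite (spt (Agen v p k))"
  unfolding Agen_alt[OF less_imp_le[OF p0]] by (rule spt_sumdelta1) simp

lemma fs_C: "finite (spt (Cg v p j))"
proof -
  have "spt (Cg v p j) \<subseteq> spt (\<lambda>x. \<Sum>t<nn v p j. delta (j(v := tv p t)) x)"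
    by (auto simp: spt_def Cg_def)
  moreover have "finite (spt (\<lambda>x. \<Sum>t<nn v p j. delta (j(v := tv p t)) x))"
    by (rule spt_sumdelta1) simp
  ultimately show ?thesis by (rule finite_subset)
qed

lemma fs_B: "finite (spt (Bgen v k))"
  unfolding Bgen_def by (rule finite_subset[OF spt_two]) simp

lemma spt_free: "f \<in> free_space V' E' m' \<Longrightarrow> finite (spt f) \<and> spt f \<subseteq> Char V' E' m'"
  unfolding free_space_def spt_def by blast

lemma W_decomp:
  assumes "f \<in> W"
  shows "\<exists>g\<in>free_space (V - {v}) E m. \<exists>r\<in>rel_space V E m. f = (\<lambda>j. linext (Agen v p) g j + r j)"
proof -
  let ?Q = "{f. \<exists>g\<in>free_space (V - {v}) E m. \<exists>r\<in>rel_space V E m. f = (\<lambda>j. linext (Agen v p) g j + r j)}"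
  have z0: "linext gen (\<lambda>_. 0) = (\<lambda>_. 0)" for gen :: "('a \<Rightarrow> int) \<Rightarrow> ('a \<Rightarrow> int) \<Rightarrow> complex"
    by (simp add: linext_def)
  have fz: "(\<lambda>_. 0) \<in> free_space (V - {v}) E m" by (simp add: free_space_def)
  have "f \<in> ?Q"
  proof (rule cspan_least[where S="relgens V E m \<union> {Agen v p k | k. k \<in> Char (V - {v}) E m}"])
    show "(\<lambda>j. 0) \<in> ?Q"
      using fz cspan_zero[of "relgens V E m"] unfolding rel_space_def
      by (intro CollectI bexI[of _ "\<lambda>_. 0"]) (auto simp: z0)
  next
    fix f1 f2 assume "f1 \<in> ?Q" "f2 \<in> ?Q"
    then obtain g1 r1 g2 r2 where g: "g1 \<in> free_space (V - {v}) E m" "r1 \<in> rel_space V E m"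
      "f1 = (\<lambda>j. linext (Agen v p) g1 j + r1 j)"
      "g2 \<in> free_space (V - {v}) E m" "r2 \<in> rel_space V E m"
      "f2 = (\<lambda>j. linext (Agen v p) g2 j + r2 j)" by blast
    have s1: "finite (spt g1)" "finite (spt g2)" using g spt_free by blast+
    have gs: "(\<lambda>k. g1 k + g2 k) \<in> free_space (V - {v}) E m"
    proof -
      have "{k. g1 k + g2 k \<noteq> 0} \<subseteq> {k. g1 k \<noteq> 0} \<union> {k. g2 k \<noteq> 0}" by auto
      then show ?thesis using g(1,4) unfolding free_space_def by (auto intro: finite_subset)
    qed
    have rs: "(\<lambda>j. r1 j + r2 j) \<in> rel_space V E m" using g unfolding rel_space_def by (intro cspan_add)
    have eq: "(\<lambda>j. f1 j + f2 j) = (\<lambda>j. linext (Agen v p) (\<lambda>k. g1 k + g2 k) j + (\<lambda>j. r1 j + r2 j) j)"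
      unfolding g(3,6) linext_add[OF s1] by (simp add: algebra_simps)
    show "(\<lambda>j. f1 j + f2 j) \<in> ?Q"
      by (rule CollectI, rule bexI[where x="\<lambda>k. g1 k + g2 k"], rule bexI[where x="\<lambda>j. r1 j + r2 j"])
        (rule eq, rule rs, rule gs)
  next
    fix f1 :: "('a \<Rightarrow> int) \<Rightarrow> complex" and a assume "f1 \<in> ?Q"
    then obtain g1 r1 where g: "g1 \<in> free_space (V - {v}) E m" "r1 \<in> rel_space V E m"
      "f1 = (\<lambda>j. linext (Agen v p) g1 j + r1 j)" by blast
    have s1: "finite (spt g1)" using g spt_free by blast
    have gs: "(\<lambda>k. a * g1 k) \<in> free_space (V - {v}) E m"
    proof -
      have "{k. a * g1 k \<noteq> 0} \<subseteq> {k. g1 k \<noteq> 0}" by auto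
      then show ?thesis using g(1) unfolding free_space_def by (auto intro: finite_subset)
    qed
    have rs: "(\<lambda>j. a * r1 j) \<in> rel_space V E m" using g unfolding rel_space_def by (intro cspan_scale)
    have eq: "(\<lambda>j. a * f1 j) = (\<lambda>j. linext (Agen v p) (\<lambda>k. a * g1 k) j + (\<lambda>j. a * r1 j) j)"
      unfolding g(3) linext_scale[OF s1] by (simp add: algebra_simps)
    show "(\<lambda>j. a * f1 j) \<in> ?Q"
      by (rule CollectI, rule bexI[where x="\<lambda>k. a * g1 k"], rule bexI[where x="\<lambda>j. a * r1 j"])
        (rule eq, rule rs, rule gs)
  next
    show "relgens V E m \<union> {Agen v p k | k. k \<in> Char (V - {v}) E m} \<subseteq> ?Q"
    proof
      fix x assume "x \<in> relgens V E m \<union> {Agen v p k | k. k \<in> Char (V - {v}) E m}"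
      then show "x \<in> ?Q"
      proof
        assume x: "x \<in> relgens V E m"
        have eq: "x = (\<lambda>j. linext (Agen v p) (\<lambda>_. 0) j + x j)" by (simp add: z0)
        have xr: "x \<in> rel_space V E m" unfolding rel_space_def by (rule cspan_base[OF x])
        show "x \<in> ?Q"
          by (rule CollectI, rule bexI[where x="\<lambda>_. 0"], rule bexI[where x="x"]) (rule eq, rule xr, rule fz)
      next
        assume "x \<in> {Agen v p k | k. k \<in> Char (V - {v}) E m}"
        then obtain k where k: "x = Agen v p k" "k \<in> Char (V - {v}) E m" by blast
        have dk: "delta k \<in> free_space (V - {v}) E m"
          using k(2) unfolding free_space_def by (auto simp: delta_def)
        have eq: "x = (\<lambda>j. linext (Agen v p) (delta k) j + (\<lambda>_. 0) j)" by (simp add: k(1) linext_delta)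
        have zr: "(\<lambda>_. 0) \<in> rel_space V E m" unfolding rel_space_def by (rule cspan_zero)
        show "x \<in> ?Q"
          by (rule CollectI, rule bexI[where x="delta k"], rule bexI[where x="\<lambda>_. 0"]) (rule eq, rule zr, rule dk)
      qed
    qed
  next
    show "f \<in> cspan (relgens V E m \<union> {Agen v p k | k. k \<in> Char (V - {v}) E m})"
      using assms unfolding Wsp_def .
  qed
  then show ?thesis by (simp only: mem_Collect_eq)
qed


lemma linext_B_spt: "linext gen f = (\<lambda>j. \<Sum>k\<in>spt f. f k * gen k j)"
  unfolding linext_def spt_def ..

lemma ker_sub:
  assumes f: "f \<in> free_space V E m" and b: "linext (Bgen v) f \<in> rel_space V E m1"
  shows "f \<in> W"
proof -
  have sf: "finite (spt f)" "spt f \<subseteq> Char V E m" using spt_free[OF f] by auto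
  have c1: "linext (Cg v p) (linext (Bgen v) f) \<in> cspan (relgens V E m \<union> {Agen v p k | k. k \<in> Char (V - {v}) E m})"
    by (rule linext_cspan[where S="relgens V E m1"]) (use fs_rel K2 b in \<open>auto simp: rel_space_def Wsp_def\<close>)
  have c2: "linext (Cg v p) (linext (Bgen v) f) = (\<lambda>z. \<Sum>k\<in>spt f. f k * linext (Cg v p) (Bgen v k) z)"
    unfolding linext_B_spt[of "Bgen v"] by (rule linext_sum[OF sf(1)]) (simp add: fs_B)
  have c3: "f = (\<lambda>z. linext (Cg v p) (linext (Bgen v) f) z + (\<Sum>k\<in>spt f. f k * (delta k z - linext (Cg v p) (Bgen v k) z)))"
  proof
    fix z
    have "f z = (\<Sum>k\<in>spt f. f k * delta k z)" using expand_fs[OF sf(1)] by metis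
    then show "f z = linext (Cg v p) (linext (Bgen v) f) z + (\<Sum>k\<in>spt f. f k * (delta k z - linext (Cg v p) (Bgen v k) z))"
      unfolding c2 by (simp add: algebra_simps sum_subtractf)
  qed
  have c4: "(\<lambda>z. \<Sum>k\<in>spt f. f k * (delta k z - linext (Cg v p) (Bgen v k) z)) \<in> W"
    unfolding Wsp_def using sf K1[unfolded Wsp_def] by (intro cspan_sum cspan_scale ballI) auto
  show ?thesis
    by (subst c3, rule W_add) (use c1 c4 in \<open>simp_all add: Wsp_def\<close>)
qed

lemma im_sub:
  assumes g: "g \<in> free_space (V - {v}) E m" and r: "r \<in> rel_space V E m"
  shows "linext (Bgen v) (\<lambda>j. linext (Agen v p) g j + r j) \<in> rel_space V E m1"
proof -
  have sg: "finite (spt g)" "spt g \<subseteq> Char (V - {v}) E m" using spt_free[OF g] by auto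
  have "linext (Agen v p) g \<in> W"
    unfolding linext_B_spt[of "Agen v p"] Wsp_def using sg
    by (intro cspan_sum cspan_scale ballI cspan_base) auto
  moreover have "r \<in> W" using r unfolding rel_space_def Wsp_def by (rule cspan_mono[rotated]) auto
  ultimately have "(\<lambda>j. linext (Agen v p) g j + r j) \<in> W" by (rule W_add)
  then show ?thesis unfolding rel_space_def Wsp_def
    by (rule linext_cspan[rotated 2]) (use fs_rel fs_A BR BA in auto)
qed

lemma surj:
  assumes h: "h \<in> free_space V E m1"
  shows "\<exists>f\<in>free_space V E m. \<exists>r\<in>rel_space V E m1. h = (\<lambda>j. linext (Bgen v) f j + r j)"
proof -
  have sh: "finite (spt h)" "spt h \<subseteq> Char V E m1" using spt_free[OF h] by auto
  define f where "f = linext (Cg v p) h"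
  have fD: "f \<in> cspan {delta k | k. k \<in> Char V E m}"
  proof -
    have "Cg v p j \<in> cspan {delta k | k. k \<in> Char V E m}" if "j \<in> Char V E m1" for j
      unfolding Cg_def using J_ch[OF that tv_ev] by (intro cspan_scale cspan_sum ballI cspan_base) auto
    then show ?thesis unfolding f_def linext_B_spt[of "Cg v p"] using sh
      by (intro cspan_sum cspan_scale ballI) auto
  qed
  have "finite (spt f) \<and> spt f \<subseteq> Char V E m"
    by (rule spt_cspan[OF _ fD]) (auto simp: spt_delta)
  then have ff: "f \<in> free_space V E m" unfolding free_space_def spt_def by blast
  define r where "r = (\<lambda>j. h j - linext (Bgen v) f j)"
  have lf: "linext (Bgen v) f = (\<lambda>z. \<Sum>j\<in>spt h. h j * linext (Bgen v) (Cg v p j) z)"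
    unfolding f_def linext_B_spt[of "Cg v p"] by (rule linext_sum[OF sh(1)]) (simp add: fs_C)
  have re: "r = (\<lambda>z. \<Sum>j\<in>spt h. h j * (delta j z - linext (Bgen v) (Cg v p j) z))"
  proof
    fix z
    have "h z = (\<Sum>k\<in>spt h. h k * delta k z)" using expand_fs[OF sh(1)] by metis
    then show "r z = (\<Sum>j\<in>spt h. h j * (delta j z - linext (Bgen v) (Cg v p j) z))"
      unfolding r_def lf by (simp add: algebra_simps sum_subtractf)
  qed
  have rr: "r \<in> rel_space V E m1"
    unfolding re rel_space_def using sh S1 by (intro cspan_sum cspan_scale ballI) auto
  have "h = (\<lambda>j. linext (Bgen v) f j + r j)" by (simp add: r_def)
  then show ?thesis using ff rr by blast
qed

end

theorem lemma5p2:
  fixes V :: "'a set" and E :: "'a \<Rightarrow> 'a \<Rightarrow> bool" and m :: "'a \<Rightarrow> int"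
    and v :: 'a and p :: int
  assumes "plumbing_forest V E m"
    and "neg_definite V E m"
    and "v \<in> V" and "m v = - p" and "p > 0"
    and "neg_definite V E (m(v := - p + 1))"
  shows
    \<comment> \<open>exactness at H(Gamma): ker B = im A\<close>
    "(\<forall>f\<in>free_space V E m.
        linext (Bgen v) f \<in> rel_space V E (m(v := - p + 1)) \<longleftrightarrow>
        (\<exists>g\<in>free_space (V - {v}) E m. \<exists>r\<in>rel_space V E m.
            f = (\<lambda>j. linext (Agen v p) g j + r j)))
     \<and>
    \<comment> \<open>exactness at H(Gamma_{+1}): B is surjective\<close>
     (\<forall>h\<in>free_space V E (m(v := - p + 1)).
        \<exists>f\<in>free_space V E m. \<exists>r\<in>rel_space V E (m(v := - p + 1)).
            h = (\<lambda>j. linext (Bgen v) f j + r j))"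
proof -
  have finV: "finite V" and symE: "\<forall>u w. E u w \<longrightarrow> E w u"
    using assms(1) unfolding plumbing_forest_def by auto
  note ctx = finV symE assms(3,4,5)
  show ?thesis
  proof (intro conjI ballI)
    fix f assume f: "f \<in> free_space V E m"
    show "linext (Bgen v) f \<in> rel_space V E (m(v := - p + 1)) \<longleftrightarrow>
        (\<exists>g\<in>free_space (V - {v}) E m. \<exists>r\<in>rel_space V E m. f = (\<lambda>j. linext (Agen v p) g j + r j))"
    proof
      assume "linext (Bgen v) f \<in> rel_space V E (m(v := - p + 1))"
      then show "\<exists>g\<in>free_space (V - {v}) E m. \<exists>r\<in>rel_space V E m. f = (\<lambda>j. linext (Agen v p) g j + r j)"
        by (rule W_decomp[where V=V and E=E and m=m and v=v and p=p, OF ctx ker_sub[where V=V and E=E and m=m and v=v and p=p, OF ctx f]])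
    next
      assume "\<exists>g\<in>free_space (V - {v}) E m. \<exists>r\<in>rel_space V E m. f = (\<lambda>j. linext (Agen v p) g j + r j)"
      then obtain g r where "g \<in> free_space (V - {v}) E m" "r \<in> rel_space V E m"
        "f = (\<lambda>j. linext (Agen v p) g j + r j)" by blast
      then show "linext (Bgen v) f \<in> rel_space V E (m(v := - p + 1))"
        using im_sub[where V=V and E=E and m=m and v=v and p=p, OF ctx] by simp
    qed
  next
    fix h assume "h \<in> free_space V E (m(v := - p + 1))"
    then show "\<exists>f\<in>free_space V E m. \<exists>r\<in>rel_space V E (m(v := - p + 1)). h = (\<lambda>j. linext (Bgen v) f j + r j)"
      by (rule surj[where V=V and E=E and m=m and v=v and p=p, OF ctx])
  qed
qed


end
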